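(* Let $k\ge0$ be an integer and $a,b,c,d\in\mathbb{C}$ with $c,\ d+1,\ a+b-d+1\notin\{0,-1,-2,\dots\}$, $d-a+1,d-b+1\notin\{0,-1,-2,\dots\}$, and $\mathrm{Re}(d-a-b-k)>0$. Then $$\begin{aligned} {}_3F_2\!\left(\left.\begin{array}{c}a,\ b,\ c+k+1\\ d+1,\ c\end{array}\right|1\right) &=\frac{(-1)^k\,\Gamma(d+1)\,\Gamma(d-a-b-k)\,(a+b-d+1)_k}{c\,\Gamma(d-a+1)\,\Gamma(d-b+1)}\\ &\quad\times\Bigg\{\big[a(b-c)+c(d-b)\big]\,{}_3F_2\!\left(\left.\begin{array}{c}-k,\ a,\ b\\ c+1,\ a+b-d+1\end{array}\right|1\right)\\ &\qquad+\frac{ab\,(c-d)\,k}{(c+1)(a+b-d+1)}\,{}_3F_2\!\left(\left.\begin{array}{c}1-k,\ a+1,\ b+1\\ c+2,\ a+b-d+2\end{array}\right|1\right)\Bigg\}, \end{aligned}$$ where the two ${}_3F_2$ on the right are terminating (finite) sums (the second term is absent when $k=0$).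
   Context: ${}_3F_2(a_1,a_2,a_3;b_1,b_2;1)=\sum_{m\ge0}\frac{(a_1)_m(a_2)_m(a_3)_m}{m!\,(b_1)_m(b_2)_m}$ with $(\alpha)_m=\Gamma(\alpha+m)/\Gamma(\alpha)$; it converges absolutely if $\mathrm{Re}(b_1+b_2-a_1-a_2-a_3)>0$, and terminates after $m=N$ if some upper parameter equals $-N$ with $N\in\{0,1,2,\dots\}$. *)

theory Defs
  imports "HOL-Analysis.Analysis"
begin

text \<open>Generalized hypergeometric series 3F2 at argument 1, as the series sum over m.
  For terminating series the terms vanish eventually, so this is the finite sum.\<close>
definition hyp3F2 :: "complex \<Rightarrow> complex \<Rightarrow> complex \<Rightarrow> complex \<Rightarrow> complex \<Rightarrow> complex" where
  "hyp3F2 a1 a2 a3 b1 b2 =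
     (\<Sum>m. pochhammer a1 m * pochhammer a2 m * pochhammer a3 m /
            (fact m * pochhammer b1 m * pochhammer b2 m))"

end

theory Submission imports Defs "HOL-Computational_Algebra.Formal_Power_Series" "HOL-Real_Asymp.Real_Asymp" begin

definition tt :: "complex \<Rightarrow> complex \<Rightarrow> complex \<Rightarrow> nat \<Rightarrow> complex" where
  "tt a b c m = pochhammer a m * pochhammer b m / (fact m * pochhammer c m)"

lemma poch_nz: "(z::complex) \<notin> \<int>\<^sub>\<le>\<^sub>0 \<Longrightarrow> pochhammer z n \<noteq> 0"
  using pochhammer_eq_0_imp_nonpos_Int by blast

lemma nonpos_plus_nat: "(z::complex) \<notin> \<int>\<^sub>\<le>\<^sub>0 \<Longrightarrow> z + of_nat n \<notin> \<int>\<^sub>\<le>\<^sub>0"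
  using nonpos_Ints_diff_Nats[of "z + of_nat n" "of_nat n"] by auto

lemma tt_asym:
  assumes "a \<notin> \<int>\<^sub>\<le>\<^sub>0" "b \<notin> \<int>\<^sub>\<le>\<^sub>0" "c \<notin> \<int>\<^sub>\<le>\<^sub>0" "m > 0"
  shows "tt a b c m = exp ((a+b-c-1) * of_real (ln (of_nat m))) *
     (Gamma_series' c m / (Gamma_series' a m * Gamma_series' b m))"
proof -
  define L where "L = (of_real (ln (of_nat m)) :: complex)"
  have e: "exp ((a+b-c-1) * L) = exp (a*L) * exp (b*L) / (exp (c*L) * of_nat m)"
    using assms(4) by (simp add: L_def exp_diff exp_add ring_distribs exp_of_real)
  have f: "fact m = (of_nat m :: complex) * fact (m - 1)"
    using assms(4) by (simp add: fact_reduce)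
  show ?thesis
    unfolding tt_def Gamma_series'_def L_def[symmetric] e f
    using poch_nz[OF assms(1)] poch_nz[OF assms(2)] poch_nz[OF assms(3)] assms(4)
    by (simp add: field_simps)
qed

lemma tt_conv:
  assumes c: "c \<notin> \<int>\<^sub>\<le>\<^sub>0" and r: "Re (c - a - b) > 0"
  shows "summable (\<lambda>m. norm (tt a b c m)) \<and> (\<lambda>m. of_nat m * tt a b c m) \<longlonglongrightarrow> 0"
proof (cases "a \<in> \<int>\<^sub>\<le>\<^sub>0 \<or> b \<in> \<int>\<^sub>\<le>\<^sub>0")
  case True
  then obtain N where N: "a = - of_nat N \<or> b = - of_nat N"
    by (auto elim!: nonpos_Ints_cases')
  have ev: "eventually (\<lambda>m. tt a b c m = 0) sequentially"
    using eventually_gt_at_top[of N]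
    by eventually_elim (use N in \<open>auto simp: tt_def pochhammer_of_nat_eq_0_lemma\<close>)
  have "summable (\<lambda>m. norm (tt a b c m))"
    by (subst summable_cong[where g = "\<lambda>_. 0"]) (use ev in \<open>auto elim: eventually_mono\<close>)
  moreover have "(\<lambda>m. of_nat m * tt a b c m) \<longlonglongrightarrow> 0"
    by (rule tendsto_eventually) (use ev in \<open>auto elim: eventually_mono\<close>)
  ultimately show ?thesis by blast
next
  case False
  hence a: "a \<notin> \<int>\<^sub>\<le>\<^sub>0" and b: "b \<notin> \<int>\<^sub>\<le>\<^sub>0" by auto
  define G where "G m = Gamma_series' c m / (Gamma_series' a m * Gamma_series' b m)" for m
  have "G \<longlonglongrightarrow> Gamma c / (Gamma a * Gamma b)"
    unfolding G_def using a b
    by (intro tendsto_intros Gamma_series'_LIMSEQ) (auto simp: Gamma_eq_zero_iff)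
  hence "Bseq G" by (intro convergent_imp_Bseq convergentI)
  then obtain K where K: "K > 0" "\<And>m. norm (G m) \<le> K" by (auto simp: Bseq_def)
  define \<delta> where "\<delta> = Re (c - a - b)"
  have nt: "norm (tt a b c m) = real m powr (-(1+\<delta>)) * norm (G m)" if "m > 0" for m
  proof -
    have e: "norm (exp ((a+b-c-1) * of_real (ln (of_nat m)))) = real m powr (-(1+\<delta>))"
      using that by (simp add: norm_exp_eq_Re powr_def \<delta>_def)
    have "tt a b c m = exp ((a+b-c-1) * of_real (ln (of_nat m))) * G m"
      using tt_asym[OF a b c that] by (simp add: G_def)
    hence "norm (tt a b c m) = norm (exp ((a+b-c-1) * of_real (ln (of_nat m)))) * norm (G m)"
      by (simp add: norm_mult)
    thus ?thesis using e by simp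
  qed
  have bd: "norm (tt a b c m) \<le> K * real m powr (-(1+\<delta>))" if "m > 0" for m
    using nt[OF that] mult_left_mono[OF K(2)[of m], of "real m powr (-(1+\<delta>))"] by (simp add: mult.commute)
  have "summable (\<lambda>m. K * real m powr (-(1+\<delta>)))"
    using r by (intro summable_mult) (simp add: summable_real_powr_iff \<delta>_def)
  hence s: "summable (\<lambda>m. norm (tt a b c m))"
    by (rule summable_comparison_test_ev[rotated])
       (use eventually_mono[OF eventually_gt_at_top[of 0] bd] in simp)
  have "(\<lambda>m. K * real m powr (-\<delta>)) \<longlonglongrightarrow> 0"
    using r by (intro tendsto_mult_right_zero tendsto_neg_powr filterlim_real_sequentially) (auto simp: \<delta>_def)
  hence "(\<lambda>m. of_nat m * tt a b c m) \<longlonglongrightarrow> 0"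
  proof (rule Lim_null_comparison[rotated])
    show "eventually (\<lambda>m. norm (of_nat m * tt a b c m) \<le> K * real m powr (-\<delta>)) sequentially"
      using eventually_gt_at_top[of 0]
    proof eventually_elim
      case (elim m)
      have "norm (of_nat m * tt a b c m) = real m * norm (tt a b c m)" by (simp add: norm_mult)
      also have "\<dots> \<le> real m * (K * real m powr (-(1+\<delta>)))"
        using bd[OF elim] by (intro mult_left_mono) auto
      also have "real m powr (-(1+\<delta>)) = real m powr (-\<delta>) / real m"
        using elim by (simp add: powr_diff powr_minus diff_conv_add_uminus[symmetric] field_simps)
      also have "real m * (K * (real m powr (-\<delta>) / real m)) = K * real m powr (-\<delta>)"
        using elim by simp
      finally show ?case .
    qed
  qed
  with s show ?thesis by blast
qed

lemma tt_0 [simp]: "tt a b c 0 = 1" by (simp add: tt_def)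

lemma tt_tel:
  assumes c: "c \<notin> \<int>\<^sub>\<le>\<^sub>0"
  shows "c*(c-a-b)*(\<Sum>m<N. tt a b c m) - (c-a)*(c-b)*(\<Sum>m<N. tt a b (c+1) m)
         = - c * of_nat N * tt a b c N"
proof (induction N)
  case 0 then show ?case by simp
next
  case (Suc N)
  have c0: "c \<noteq> 0" using c by auto
  have cN: "c + of_nat N \<noteq> 0" using nonpos_plus_nat[OF c, of N] by auto
  have pc: "pochhammer c N \<noteq> 0" using poch_nz[OF c] .
  have p1: "pochhammer (c+1) N = pochhammer c N * (c + of_nat N) / c"
    using pochhammer_rec[of c N] pochhammer_rec'[of c N] c0 by (simp add: field_simps)
  have step: "c*(c-a-b)*tt a b c N - (c-a)*(c-b)*tt a b (c+1) N
       = c * of_nat N * tt a b c N - c * of_nat (Suc N) * tt a b c (Suc N)"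
  proof -
    have f0: "fact N \<noteq> (0::complex)" by simp
    have n1: "(1::complex) + of_nat N \<noteq> 0" by (metis of_nat_Suc of_nat_eq_0_iff nat.distinct(1) add.commute)
    have t1: "tt a b (c+1) N = tt a b c N * c / (c + of_nat N)"
      unfolding tt_def p1 using c0 cN pc f0 by (simp add: field_simps)
    have t2: "tt a b c (Suc N) = tt a b c N * (a + of_nat N) * (b + of_nat N) / ((1 + of_nat N) * (c + of_nat N))"
      unfolding tt_def pochhammer_rec'[of a N] pochhammer_rec'[of b N] pochhammer_rec'[of c N] fact_Suc
      using c0 cN pc f0 n1 by (simp add: field_simps)
    have t2': "of_nat (Suc N) * tt a b c (Suc N) = tt a b c N * (a + of_nat N) * (b + of_nat N) / (c + of_nat N)"
      unfolding t2 using n1 cN by simp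
    have "c * of_nat (Suc N) * tt a b c (Suc N) = c * (of_nat (Suc N) * tt a b c (Suc N))" by simp
    also have "\<dots> = c * (tt a b c N * (a + of_nat N) * (b + of_nat N) / (c + of_nat N))" by (simp only: t2')
    finally have e2: "c * of_nat (Suc N) * tt a b c (Suc N) = c * (tt a b c N * (a + of_nat N) * (b + of_nat N) / (c + of_nat N))" .
    have "c*(c-a-b)*tt a b c N - (c-a)*(c-b)*(tt a b c N * c / (c + of_nat N))
       = c * of_nat N * tt a b c N - c * (tt a b c N * (a + of_nat N) * (b + of_nat N) / (c + of_nat N))"
      using cN by (simp add: field_simps)
    thus ?thesis unfolding t1 e2 .
  qed
  have "c*(c-a-b)*(\<Sum>m<Suc N. tt a b c m) - (c-a)*(c-b)*(\<Sum>m<Suc N. tt a b (c+1) m)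
     = (c*(c-a-b)*(\<Sum>m<N. tt a b c m) - (c-a)*(c-b)*(\<Sum>m<N. tt a b (c+1) m))
       + (c*(c-a-b)*tt a b c N - (c-a)*(c-b)*tt a b (c+1) N)"
    by (simp add: algebra_simps)
  also have "\<dots> = - c * of_nat (Suc N) * tt a b c (Suc N)"
    unfolding Suc.IH step by simp
  finally show ?case .
qed

lemma tt_summable:
  assumes c: "c \<notin> \<int>\<^sub>\<le>\<^sub>0" and r: "Re (c - a - b) > 0"
  shows "summable (tt a b c)"
  using tt_conv[OF assms] summable_norm_cancel by blast

lemma F_contig:
  assumes c: "c \<notin> \<int>\<^sub>\<le>\<^sub>0" and r: "Re (c - a - b) > 0"
  shows "c*(c-a-b) * suminf (tt a b c) = (c-a)*(c-b) * suminf (tt a b (c+1))"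
proof -
  have c1: "c + 1 \<notin> \<int>\<^sub>\<le>\<^sub>0" using nonpos_plus_nat[OF c, of 1] by simp
  have r1: "Re (c + 1 - a - b) > 0" using r by simp
  have l1: "(\<lambda>N. \<Sum>m<N. tt a b c m) \<longlonglongrightarrow> suminf (tt a b c)"
    using summable_LIMSEQ[OF tt_summable[OF c r]] .
  have l2: "(\<lambda>N. \<Sum>m<N. tt a b (c+1) m) \<longlonglongrightarrow> suminf (tt a b (c+1))"
    using summable_LIMSEQ[OF tt_summable[OF c1 r1]] .
  have "(\<lambda>N. c*(c-a-b)*(\<Sum>m<N. tt a b c m) - (c-a)*(c-b)*(\<Sum>m<N. tt a b (c+1) m))
      \<longlonglongrightarrow> c*(c-a-b) * suminf (tt a b c) - (c-a)*(c-b) * suminf (tt a b (c+1))"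
    by (intro tendsto_intros l1 l2)
  moreover have "(\<lambda>N. c*(c-a-b)*(\<Sum>m<N. tt a b c m) - (c-a)*(c-b)*(\<Sum>m<N. tt a b (c+1) m))
      \<longlonglongrightarrow> 0"
  proof -
    have "(\<lambda>N. - c * (of_nat N * tt a b c N)) \<longlonglongrightarrow> - c * 0"
      using tt_conv[OF c r] by (intro tendsto_intros) auto
    thus ?thesis unfolding tt_tel[OF c] by (simp add: mult.assoc)
  qed
  ultimately show ?thesis using LIMSEQ_unique by fastforce
qed

lemma F_iter:
  assumes c: "c \<notin> \<int>\<^sub>\<le>\<^sub>0" and r: "Re (c - a - b) > 0"
  shows "pochhammer c n * pochhammer (c-a-b) n * suminf (tt a b c) =
         pochhammer (c-a) n * pochhammer (c-b) n * suminf (tt a b (c + of_nat n))"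
proof (induction n)
  case 0 then show ?case by simp
next
  case (Suc n)
  have cn: "c + of_nat n \<notin> \<int>\<^sub>\<le>\<^sub>0" using nonpos_plus_nat[OF c] .
  have rn: "Re (c + of_nat n - a - b) > 0" using r by simp
  have e: "(c + of_nat n)*(c + of_nat n-a-b) * suminf (tt a b (c + of_nat n)) =
     (c + of_nat n-a)*(c + of_nat n-b) * suminf (tt a b (c + of_nat n + 1))"
    using F_contig[OF cn rn] .
  have "pochhammer c (Suc n) * pochhammer (c-a-b) (Suc n) * suminf (tt a b c)
     = (c + of_nat n)*(c + of_nat n-a-b) * (pochhammer c n * pochhammer (c-a-b) n * suminf (tt a b c))"
    by (simp add: pochhammer_rec' algebra_simps)
  also have "\<dots> = pochhammer (c-a) n * pochhammer (c-b) n *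
       ((c + of_nat n)*(c + of_nat n-a-b) * suminf (tt a b (c + of_nat n)))"
    using Suc.IH by (simp add: algebra_simps)
  also have "\<dots> = pochhammer (c-a) (Suc n) * pochhammer (c-b) (Suc n) * suminf (tt a b (c + of_nat (Suc n)))"
    unfolding e by (simp add: pochhammer_rec' algebra_simps)
  finally show ?case .
qed

lemma poch_nonneg: "0 \<le> (x::real) \<Longrightarrow> 0 \<le> pochhammer x n"
  by (induction n) (auto simp: pochhammer_rec')

lemma norm_poch_le: "norm (pochhammer (z::complex) m) \<le> pochhammer (norm z) m"
proof (induction m)
  case (Suc m)
  have "norm (pochhammer z (Suc m)) = norm (z + of_nat m) * norm (pochhammer z m)"
    by (simp add: pochhammer_rec' norm_mult)
  also have "\<dots> \<le> (norm z + of_nat m) * pochhammer (norm z) m"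
    using Suc.IH norm_triangle_ineq[of z "of_nat m"] by (intro mult_mono) auto
  finally show ?case by (simp add: pochhammer_rec')
qed simp

lemma norm_poch_ge: "Re z \<ge> 0 \<Longrightarrow> pochhammer (Re z) m \<le> norm (pochhammer (z::complex) m)"
proof (induction m)
  case (Suc m)
  have "pochhammer (Re z) (Suc m) = Re (z + of_nat m) * pochhammer (Re z) m"
    by (simp add: pochhammer_rec')
  also have "\<dots> \<le> norm (z + of_nat m) * norm (pochhammer z m)"
    using Suc complex_Re_le_cmod[of "z + of_nat m"]
    by (intro mult_mono) (auto simp: poch_nonneg)
  finally show ?case by (simp add: pochhammer_rec' norm_mult)
qed simp

lemma poch_mono: "0 \<le> x \<Longrightarrow> x \<le> y \<Longrightarrow> pochhammer x m \<le> pochhammer (y::real) m"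
proof (induction m)
  case (Suc m)
  thus ?case unfolding pochhammer_rec'
    by (intro mult_mono) (auto simp: poch_nonneg)
qed simp

lemma tail_bound:
  fixes z a b :: complex and R0 :: real
  assumes R0: "0 < R0" "R0 \<le> Re z"
  shows "norm (tt a b z (Suc m)) \<le> norm a * norm b / Re z *
    (pochhammer (norm a + 1) m * pochhammer (norm b + 1) m / (fact m * pochhammer (R0 + 1) m))"
proof -
  define A B R where "A = norm a" "B = norm b" "R = Re z"
  have R: "R > 0" "R0 \<le> R" using R0 by (auto simp: A_B_R_def)
  have n1: "norm (tt a b z (Suc m)) = norm (pochhammer a (Suc m)) * norm (pochhammer b (Suc m))
      / (fact (Suc m) * norm (pochhammer z (Suc m)))"
  proof -
    have "norm (1 + of_nat m :: complex) = 1 + real m" by (metis of_nat_Suc norm_of_nat)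
    thus ?thesis by (simp add: tt_def norm_mult norm_divide)
  qed
  have num: "norm (pochhammer a (Suc m)) * norm (pochhammer b (Suc m)) \<le> pochhammer A (Suc m) * pochhammer B (Suc m)"
    unfolding A_B_R_def by (intro mult_mono norm_poch_le) (auto simp: poch_nonneg)
  have p0: "0 < pochhammer (R0 + 1) m" using R0 by (intro pochhammer_pos) auto
  have d1: "fact m * R * pochhammer (R0+1) m \<le> fact (Suc m) * pochhammer R (Suc m)"
  proof -
    have f: "fact m \<le> (fact (Suc m) :: real)" by (rule fact_mono) simp
    have "R * pochhammer (R0+1) m \<le> R * pochhammer (R+1) m"
      using R p0 R0(1) poch_mono[of "R0+1" "R+1" m] by (intro mult_left_mono) auto
    hence "fact m * (R * pochhammer (R0+1) m) \<le> fact (Suc m) * (R * pochhammer (R+1) m)"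
      using f R p0 by (intro mult_mono) (auto simp: poch_nonneg)
    hence "fact m * R * pochhammer (R0+1) m \<le> fact (Suc m) * (R * pochhammer (R+1) m)"
      by (simp add: mult.assoc)
    thus ?thesis by (simp add: pochhammer_rec)
  qed
  have d2: "fact (Suc m) * pochhammer R (Suc m) \<le> fact (Suc m) * norm (pochhammer z (Suc m))"
    using R norm_poch_ge[of z "Suc m"] unfolding A_B_R_def by (intro mult_left_mono) auto
  have "norm (tt a b z (Suc m)) \<le> pochhammer A (Suc m) * pochhammer B (Suc m) / (fact m * R * pochhammer (R0+1) m)"
    unfolding n1 using num order_trans[OF d1 d2] R p0
    by (intro frac_le) (auto simp: poch_nonneg A_B_R_def)
  also have "\<dots> = A * B / R * (pochhammer (A + 1) m * pochhammer (B + 1) m / (fact m * pochhammer (R0 + 1) m))"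
    using R p0 by (simp add: pochhammer_rec field_simps)
  finally show ?thesis by (simp add: A_B_R_def)
qed

lemma not_nonpos_pos: "Re (z::complex) > 0 \<Longrightarrow> z \<notin> \<int>\<^sub>\<le>\<^sub>0"
  by (auto elim!: nonpos_Ints_cases')

lemma F_lim1: "(\<lambda>n. suminf (tt a b (c + of_nat n))) \<longlonglongrightarrow> 1"
proof -
  define A B where "A = norm a" "B = norm b"
  obtain n0 :: nat where n0: "A + B + 1 - Re c < of_nat n0" using reals_Archimedean2 by blast
  define R0 where "R0 = Re c + of_nat n0"
  have R0a: "R0 > A + B + 1" using n0 by (simp add: R0_def)
  have "0 \<le> A" "0 \<le> B" by (simp_all add: A_B_def)
  hence "A + B + 1 > 0" by linarith
  hence R0: "R0 > A + B + 1" "R0 > 0" using R0a by auto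
  define w where "w m = pochhammer (A + 1) m * pochhammer (B + 1) m / (fact m * pochhammer (R0 + 1) m)" for m
  have "summable (\<lambda>m. norm (tt (of_real (A+1)) (of_real (B+1)) (of_real (R0+1)) m))"
    using R0 by (intro conjunct1[OF tt_conv] not_nonpos_pos) auto
  moreover have "norm (tt (of_real (A+1)) (of_real (B+1)) (of_real (R0+1)) m) = w m" for m
  proof -
    have np: "norm (pochhammer (of_real x :: complex) m) = pochhammer x m" if "0 \<le> x" for x
      using that by (simp only: pochhammer_of_real norm_of_real) (simp add: poch_nonneg)
    have "0 \<le> A" "0 \<le> B" by (simp_all add: A_B_def)
    thus ?thesis using R0 unfolding tt_def w_def norm_divide norm_mult
      by (subst (1 2 3) np) (auto simp del: of_real_add)
  qed
  ultimately have sw: "summable w" by simp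
  have w0: "w m \<ge> 0" for m using R0 by (auto simp: w_def poch_nonneg A_B_def)
  define W where "W = suminf w"
  have "eventually (\<lambda>n. norm (suminf (tt a b (c + of_nat n)) - 1) \<le> A * B * W / (Re c + of_nat n)) sequentially"
    using eventually_ge_at_top[of n0]
  proof eventually_elim
    case (elim n)
    define z where "z = c + of_nat n"
    have Rz: "R0 \<le> Re z" using elim by (simp add: z_def R0_def)
    have bd: "norm (tt a b z (Suc m)) \<le> A * B / Re z * w m" for m
      using tail_bound[OF R0(2) Rz] by (simp add: w_def A_B_def)
    have s1: "summable (\<lambda>m. A * B / Re z * w m)" using sw by (rule summable_mult)
    have s2: "summable (\<lambda>m. norm (tt a b z (Suc m)))"
      by (rule summable_comparison_test[OF _ s1]) (use bd in auto)
    hence s3: "summable (\<lambda>m. tt a b z (Suc m))" by (rule summable_norm_cancel)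
    hence s4: "summable (tt a b z)" by (simp add: summable_Suc_iff)
    have "suminf (tt a b z) - 1 = (\<Sum>m. tt a b z (Suc m))"
      using suminf_split_head[OF s4] by simp
    also have "norm \<dots> \<le> (\<Sum>m. norm (tt a b z (Suc m)))" by (rule summable_norm[OF s2])
    also have "\<dots> \<le> (\<Sum>m. A * B / Re z * w m)" by (rule suminf_le[OF bd s2 s1])
    also have "\<dots> = A * B * W / Re z" using suminf_mult[OF sw, of "A * B / Re z"] by (simp add: W_def)
    finally show ?case by (simp add: z_def)
  qed
  moreover have "(\<lambda>n. A * B * W / (Re c + of_nat n)) \<longlonglongrightarrow> 0"
    by real_asymp
  ultimately have "(\<lambda>n. suminf (tt a b (c + of_nat n)) - 1) \<longlonglongrightarrow> 0"
    by (rule Lim_null_comparison)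
  thus ?thesis by (simp add: LIM_zero_iff)
qed

lemma F_lim2:
  assumes c: "c \<notin> \<int>\<^sub>\<le>\<^sub>0" and ca: "c - a \<notin> \<int>\<^sub>\<le>\<^sub>0" and cb: "c - b \<notin> \<int>\<^sub>\<le>\<^sub>0"
    and r: "Re (c - a - b) > 0"
  shows "(\<lambda>n. pochhammer (c-a) n * pochhammer (c-b) n / (pochhammer c n * pochhammer (c-a-b) n))
     \<longlonglongrightarrow> Gamma c * Gamma (c-a-b) / (Gamma (c-a) * Gamma (c-b))"
proof -
  have cab: "c - a - b \<notin> \<int>\<^sub>\<le>\<^sub>0" using r by (rule not_nonpos_pos)
  have lim: "(\<lambda>n. Gamma_series' c n * Gamma_series' (c-a-b) n / (Gamma_series' (c-a) n * Gamma_series' (c-b) n))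
     \<longlonglongrightarrow> Gamma c * Gamma (c-a-b) / (Gamma (c-a) * Gamma (c-b))"
    using ca cb by (intro tendsto_intros Gamma_series'_LIMSEQ) (auto simp: Gamma_eq_zero_iff)
  show ?thesis
  proof (rule Lim_transform_eventually[OF lim])
    show "eventually (\<lambda>n. Gamma_series' c n * Gamma_series' (c-a-b) n / (Gamma_series' (c-a) n * Gamma_series' (c-b) n)
      = pochhammer (c-a) n * pochhammer (c-b) n / (pochhammer c n * pochhammer (c-a-b) n)) sequentially"
      using eventually_gt_at_top[of 0]
    proof eventually_elim
      case (elim n)
      define L where "L = (of_real (ln (of_nat n)) :: complex)"
      have e: "exp ((c-b)*L) = exp (c*L) * exp ((c-a-b)*L) / exp ((c-a)*L)"
        by (simp add: exp_diff[symmetric] exp_add[symmetric] algebra_simps)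
      show ?case
        unfolding Gamma_series'_def L_def[symmetric] e
        using poch_nz[OF c, of n] poch_nz[OF ca, of n] poch_nz[OF cb, of n] poch_nz[OF cab, of n]
        by (simp add: field_simps)
    qed
  qed
qed

lemma gauss:
  assumes c: "c \<notin> \<int>\<^sub>\<le>\<^sub>0" and ca: "c - a \<notin> \<int>\<^sub>\<le>\<^sub>0" and cb: "c - b \<notin> \<int>\<^sub>\<le>\<^sub>0"
    and r: "Re (c - a - b) > 0"
  shows "suminf (tt a b c) = Gamma c * Gamma (c-a-b) / (Gamma (c-a) * Gamma (c-b))"
proof -
  have cab: "c - a - b \<notin> \<int>\<^sub>\<le>\<^sub>0" using r by (rule not_nonpos_pos)
  have eq: "suminf (tt a b c) = pochhammer (c-a) n * pochhammer (c-b) n / (pochhammer c n * pochhammer (c-a-b) n)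
     * suminf (tt a b (c + of_nat n))" for n
    using F_iter[OF c r, of n] poch_nz[OF c, of n] poch_nz[OF cab, of n]
    by (simp add: field_simps)
  have "(\<lambda>n. pochhammer (c-a) n * pochhammer (c-b) n / (pochhammer c n * pochhammer (c-a-b) n)
     * suminf (tt a b (c + of_nat n))) \<longlonglongrightarrow> Gamma c * Gamma (c-a-b) / (Gamma (c-a) * Gamma (c-b)) * 1"
    by (intro tendsto_mult F_lim2[OF assms] F_lim1)
  hence "(\<lambda>n. suminf (tt a b c)) \<longlonglongrightarrow> Gamma c * Gamma (c-a-b) / (Gamma (c-a) * Gamma (c-b))"
    unfolding eq[symmetric] by simp
  thus ?thesis by (simp add: LIMSEQ_const_iff)
qed

lemma pascal_sum:
  fixes f :: "nat \<Rightarrow> complex"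
  shows "(\<Sum>j\<le>Suc k. of_nat (Suc k choose j) * f j) = (\<Sum>j\<le>k. of_nat (k choose j) * (f j + f (Suc j)))"
proof -
  have "(\<Sum>j\<le>Suc k. of_nat (Suc k choose j) * f j)
      = f 0 + (\<Sum>j\<le>k. of_nat (Suc k choose Suc j) * f (Suc j))"
    by (subst sum.atMost_Suc_shift) simp
  also have "\<dots> = f 0 + (\<Sum>j\<le>k. of_nat (k choose Suc j) * f (Suc j)) + (\<Sum>j\<le>k. of_nat (k choose j) * f (Suc j))"
    by (simp add: sum.distrib algebra_simps)
  also have "f 0 + (\<Sum>j\<le>k. of_nat (k choose Suc j) * f (Suc j)) = (\<Sum>j\<le>Suc k. of_nat (k choose j) * f j)"
    by (subst sum.atMost_Suc_shift) simp
  also have "\<dots> = (\<Sum>j\<le>k. of_nat (k choose j) * f j)"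
    by simp
  finally show ?thesis by (simp add: sum.distrib algebra_simps)
qed

lemma FI_term:
  fixes a b c x :: complex and k i :: nat
  assumes c: "c \<notin> \<int>\<^sub>\<le>\<^sub>0" and i: "i \<le> k"
  defines "f \<equiv> \<lambda>j. (-1)^(Suc k - j) * (pochhammer a j * pochhammer b j) / pochhammer c j
                     * pochhammer (x + of_nat j) (Suc k - j)"
  shows "c * (-1)^k * (f i + f (Suc i)) =
    (a*b - c*x - (c - (a+b-x)) * of_nat i) *
    ((-1)^i * (pochhammer a i * pochhammer b i) / pochhammer (c+1) i * pochhammer (x + 1 + of_nat i) (k - i))"
proof -
  define p q q1 y s t where "p = pochhammer a i * pochhammer b i" "q = pochhammer c i"
    "q1 = pochhammer (c+1) i" "y = pochhammer (x + 1 + of_nat i) (k - i)"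
    "s = ((-1)^(k-i) :: complex)" "t = ((-1)^i :: complex)"
  have ci: "c + of_nat i \<noteq> 0" using c
    by (metis add.inverse_inverse minus_of_nat_in_nonpos_Ints neg_eq_iff_add_eq_0)
  have c0: "c \<noteq> 0" using c by auto
  have q0: "q \<noteq> 0" unfolding p_q_q1_y_s_t_def using c by (auto dest: pochhammer_eq_0_imp_nonpos_Int)
  have qq: "c * q1 = q * (c + of_nat i)"
    unfolding p_q_q1_y_s_t_def using pochhammer_rec[of c i] pochhammer_rec'[of c i] by (simp add: mult.commute)
  have q10: "q1 \<noteq> 0" using qq q0 ci c0 by auto
  have kk: "(-1)^k = s * t" unfolding p_q_q1_y_s_t_def using i
    by (metis le_add_diff_inverse2 power_add)
  have ss: "s * s = 1" unfolding p_q_q1_y_s_t_def by (simp flip: power_add)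
  have fi: "f i = - s * p / q * ((x + of_nat i) * y)"
    unfolding f_def p_q_q1_y_s_t_def using i
    by (simp add: Suc_diff_le pochhammer_rec add_ac)
  have fsi: "f (Suc i) = s * (p * ((a + of_nat i) * (b + of_nat i))) / (q * (c + of_nat i)) * y"
    unfolding f_def p_q_q1_y_s_t_def using i
    by (simp add: pochhammer_rec' add_ac mult_ac)
  define D where "D = q * (c + of_nat i)"
  have D0: "D \<noteq> 0" using q0 ci by (simp add: D_def)
  have q1e: "q1 = D / c" using qq c0 by (simp add: field_simps D_def)
  have qe: "q = D / (c + of_nat i)" using ci by (simp add: D_def)
  have fsi': "f (Suc i) = s * (p * ((a + of_nat i) * (b + of_nat i))) / D * y"
    using fsi by (simp add: D_def)
  have "c * (-1)^k * (f i + f (Suc i)) = c * (s * s) * t * p * y / D * ((a + of_nat i) * (b + of_nat i) - (x + of_nat i) * (c + of_nat i))"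
    unfolding fi fsi' kk qe using D0 ci by (simp add: field_simps)
  also have "\<dots> = t * p * y * c / D * (a*b - c*x - (c - (a+b-x)) * of_nat i)"
    unfolding ss by (simp add: algebra_simps)
  also have "\<dots> = (a*b - c*x - (c - (a+b-x)) * of_nat i) * (t * p / q1 * y)"
    unfolding q1e using D0 c0 by (simp add: field_simps)
  finally show ?thesis unfolding p_q_q1_y_s_t_def .
qed


lemma shift_term:
  assumes e: "e \<notin> \<int>\<^sub>\<le>\<^sub>0"
  shows "pochhammer (- of_nat (i+j)) j * tt a b e (i+j) =
    (-1)^j * (pochhammer a j * pochhammer b j / pochhammer e j) * tt (a + of_nat j) (b + of_nat j) (e + of_nat j) i"
proof -
  have p1: "pochhammer (- of_nat (i+j)) j = (-1)^j * pochhammer (of_nat i + 1 :: complex) j"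
    using pochhammer_minus[of "of_nat (i+j) :: complex" j] by simp
  have f1: "fact (i+j) = fact i * pochhammer (of_nat i + 1 :: complex) j"
    by (simp add: pochhammer_fact pochhammer_product' add_ac)
  have pa: "pochhammer z (i+j) = pochhammer z j * pochhammer (z + of_nat j) i" for z :: complex
    by (simp add: pochhammer_product'[of z j i, symmetric] add_ac)
  have n1: "pochhammer (of_nat i + 1 :: complex) j \<noteq> 0"
    by (auto simp: pochhammer_eq_0_iff) (metis add.commute of_nat_Suc of_nat_add neg_eq_iff_add_eq_0 add_eq_0_iff_both_eq_0 Suc_neq_Zero of_nat_eq_0_iff)
  have n2: "pochhammer e j \<noteq> 0" "pochhammer (e + of_nat j) i \<noteq> 0"
    using poch_nz[OF e] poch_nz[OF nonpos_plus_nat[OF e]] by auto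
  show ?thesis
    unfolding tt_def p1 f1 pa using n1 n2 by (simp add: field_simps)
qed

lemma inner_sum:
  assumes e: "e \<notin> \<int>\<^sub>\<le>\<^sub>0" and ea: "e - a \<notin> \<int>\<^sub>\<le>\<^sub>0" and eb: "e - b \<notin> \<int>\<^sub>\<le>\<^sub>0"
    and j: "j \<le> n" and r: "Re (e - a - b - of_nat n) > 0"
  shows "(\<lambda>m. pochhammer (- of_nat m) j * tt a b e m) sums
    ((-1)^j * pochhammer a j * pochhammer b j * Gamma e * Gamma (e-a-b-of_nat n)
      * pochhammer (e-a-b-of_nat n) (n-j) / (Gamma (e-a) * Gamma (e-b)))"
proof -
  define v where "v = e - a - b - of_nat n"
  have v: "v \<notin> \<int>\<^sub>\<le>\<^sub>0" using r by (intro not_nonpos_pos) (simp add: v_def)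
  have ej: "e + of_nat j \<notin> \<int>\<^sub>\<le>\<^sub>0" by (rule nonpos_plus_nat[OF e])
  have ea': "e + of_nat j - (a + of_nat j) \<notin> \<int>\<^sub>\<le>\<^sub>0" using ea by simp
  have eb': "e + of_nat j - (b + of_nat j) \<notin> \<int>\<^sub>\<le>\<^sub>0" using eb by simp
  have vv: "e + of_nat j - (a + of_nat j) - (b + of_nat j) = v + of_nat (n - j)"
    using j by (simp add: v_def of_nat_diff)
  have r': "Re (e + of_nat j - (a + of_nat j) - (b + of_nat j)) > 0"
    unfolding vv using r by (simp add: v_def)
  have "tt (a + of_nat j) (b + of_nat j) (e + of_nat j) sums
      (Gamma (e + of_nat j) * Gamma (v + of_nat (n - j)) / (Gamma (e - a) * Gamma (e - b)))"
    using summable_sums[OF tt_summable[OF ej r']] gauss[OF ej ea' eb' r'] unfolding vv by simp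
  also have "Gamma (e + of_nat j) = Gamma e * pochhammer e j"
    using pochhammer_Gamma[OF e, of j] e by (simp add: Gamma_eq_zero_iff)
  also have "Gamma (v + of_nat (n - j)) = Gamma v * pochhammer v (n - j)"
    using pochhammer_Gamma[OF v, of "n-j"] v by (simp add: Gamma_eq_zero_iff)
  finally have s: "tt (a + of_nat j) (b + of_nat j) (e + of_nat j) sums
      (Gamma e * pochhammer e j * (Gamma v * pochhammer v (n - j)) / (Gamma (e - a) * Gamma (e - b)))" .
  have "(\<lambda>i. pochhammer (- of_nat (i+j)) j * tt a b e (i+j)) sums
     ((-1)^j * (pochhammer a j * pochhammer b j / pochhammer e j) *
      (Gamma e * pochhammer e j * (Gamma v * pochhammer v (n - j)) / (Gamma (e - a) * Gamma (e - b))))"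
    unfolding shift_term[OF e] by (rule sums_mult[OF s])
  also have "\<dots> = (-1)^j * pochhammer a j * pochhammer b j * Gamma e * Gamma v
      * pochhammer v (n-j) / (Gamma (e-a) * Gamma (e-b))"
    using poch_nz[OF e, of j] by (simp add: field_simps)
  finally have s2: "(\<lambda>i. pochhammer (- of_nat (i+j)) j * tt a b e (i+j)) sums
      ((-1)^j * pochhammer a j * pochhammer b j * Gamma e * Gamma v
      * pochhammer v (n-j) / (Gamma (e-a) * Gamma (e-b)))" .
  have z: "(\<Sum>i<j. pochhammer (- of_nat i) j * tt a b e i) = 0"
    by (intro sum.neutral) (auto simp: pochhammer_of_nat_eq_0_lemma)
  show ?thesis using s2 unfolding sums_iff_shift[where f = "\<lambda>m. pochhammer (- of_nat m) j * tt a b e m"] z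
    by (simp add: v_def)
qed

lemma poch_neg_nat: "pochhammer (- of_nat k :: complex) i = (-1)^i * fact i * of_nat (k choose i)"
proof -
  have "of_nat (k choose i) = ((-1)^i * pochhammer (- of_nat k) i / fact i :: complex)"
    using gbinomial_pochhammer[of "of_nat k :: complex" i] by (simp add: binomial_gbinomial)
  hence "(-1)^i * fact i * of_nat (k choose i) = ((-1)^i * (-1)^i) * (pochhammer (- of_nat k) i :: complex)"
    by simp
  thus ?thesis by (simp flip: power_add)
qed

lemma H1:
  assumes x1: "x + 1 \<notin> \<int>\<^sub>\<le>\<^sub>0"
  shows "hyp3F2 (- of_nat k) a b C (x+1) * pochhammer (x+1) k =
    (\<Sum>i\<le>k. (-1)^i * of_nat (k choose i) * (pochhammer a i * pochhammer b i) / pochhammer C i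
       * pochhammer (x + 1 + of_nat i) (k - i))"
proof -
  have "hyp3F2 (- of_nat k) a b C (x+1) = (\<Sum>i\<le>k. pochhammer (- of_nat k) i * pochhammer a i * pochhammer b i /
            (fact i * pochhammer C i * pochhammer (x+1) i))"
    unfolding hyp3F2_def by (rule suminf_finite) (auto simp: pochhammer_of_nat_eq_0_lemma)
  hence "hyp3F2 (- of_nat k) a b C (x+1) * pochhammer (x+1) k = (\<Sum>i\<le>k. pochhammer (- of_nat k) i * pochhammer a i * pochhammer b i /
            (fact i * pochhammer C i * pochhammer (x+1) i) * pochhammer (x+1) k)"
    by (simp add: sum_distrib_right)
  also have "\<dots> = (\<Sum>i\<le>k. (-1)^i * of_nat (k choose i) * (pochhammer a i * pochhammer b i) / pochhammer C i
       * pochhammer (x + 1 + of_nat i) (k - i))"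
  proof (intro sum.cong refl)
    fix i assume i: "i \<in> {..k}"
    have pp: "pochhammer (x+1) k = pochhammer (x+1) i * pochhammer (x + 1 + of_nat i) (k - i)"
      using i by (intro pochhammer_product) auto
    show "pochhammer (- of_nat k) i * pochhammer a i * pochhammer b i /
            (fact i * pochhammer C i * pochhammer (x+1) i) * pochhammer (x+1) k =
          (-1)^i * of_nat (k choose i) * (pochhammer a i * pochhammer b i) / pochhammer C i
       * pochhammer (x + 1 + of_nat i) (k - i)"
      unfolding pp poch_neg_nat using poch_nz[OF x1, of i] by (simp add: field_simps)
  qed
  finally show ?thesis .
qed

lemma H2:
  assumes x1: "x + 1 \<notin> \<int>\<^sub>\<le>\<^sub>0" and c: "c \<notin> \<int>\<^sub>\<le>\<^sub>0"
  shows "a*b*(c-d) * of_nat (Suc k) / ((c+1)*(x+1)) * hyp3F2 (1 - of_nat (Suc k)) (a+1) (b+1) (c+2) (x+2)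
     * pochhammer (x+1) (Suc k) =
     - (c-d) * (\<Sum>i\<le>Suc k. of_nat i * ((-1)^i * of_nat (Suc k choose i) * (pochhammer a i * pochhammer b i)
        / pochhammer (c+1) i * pochhammer (x + 1 + of_nat i) (Suc k - i)))"
proof -
  have x2: "(x+1) + 1 \<notin> \<int>\<^sub>\<le>\<^sub>0" using nonpos_plus_nat[OF x1, of 1] by simp
  have c1: "c + 1 \<noteq> 0" using nonpos_plus_nat[OF c, of 1] by auto
  have x10: "x + 1 \<noteq> 0" using x1 by auto
  have h: "hyp3F2 (- of_nat k) (a+1) (b+1) (c+2) (x+2) * pochhammer (x+2) k =
    (\<Sum>i\<le>k. (-1)^i * of_nat (k choose i) * (pochhammer (a+1) i * pochhammer (b+1) i) / pochhammer (c+2) i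
       * pochhammer (x + 2 + of_nat i) (k - i))"
    using H1[OF x2, of k "a+1" "b+1" "c+2"] by (simp add: add.assoc)
  have px: "pochhammer (x+1) (Suc k) = (x+1) * pochhammer (x+2) k"
    by (simp add: pochhammer_rec add.assoc)
  have "a*b*(c-d) * of_nat (Suc k) / ((c+1)*(x+1)) * hyp3F2 (1 - of_nat (Suc k)) (a+1) (b+1) (c+2) (x+2)
     * pochhammer (x+1) (Suc k) = a*b*(c-d) * of_nat (Suc k) / (c+1) *
       (hyp3F2 (- of_nat k) (a+1) (b+1) (c+2) (x+2) * pochhammer (x+2) k)"
    unfolding px using x10 by simp
  also have "\<dots> = (\<Sum>i\<le>k. a*b*(c-d) * of_nat (Suc k) / (c+1) * ((-1)^i * of_nat (k choose i) *
       (pochhammer (a+1) i * pochhammer (b+1) i) / pochhammer (c+2) i * pochhammer (x + 2 + of_nat i) (k - i)))"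
    unfolding h by (simp add: sum_distrib_left)
  also have "\<dots> = (\<Sum>i\<le>k. - (c-d) * (of_nat (Suc i) * ((-1)^(Suc i) * of_nat (Suc k choose Suc i) *
       (pochhammer a (Suc i) * pochhammer b (Suc i))
        / pochhammer (c+1) (Suc i) * pochhammer (x + 1 + of_nat (Suc i)) (Suc k - Suc i))))"
  proof (intro sum.cong refl)
    fix i
    have bn: "of_nat (Suc i) * of_nat (Suc k choose Suc i) = (of_nat (Suc k) * of_nat (k choose i) :: complex)"
      by (simp only: of_nat_mult[symmetric] Suc_times_binomial)
    have pc: "pochhammer (c+1) (Suc i) = (c+1) * pochhammer (c+2) i"
      by (simp add: pochhammer_rec add.assoc)
    have xx: "x + 1 + of_nat (Suc i) = x + 2 + of_nat i" by simp
    show "a*b*(c-d) * of_nat (Suc k) / (c+1) * ((-1)^i * of_nat (k choose i) *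
       (pochhammer (a+1) i * pochhammer (b+1) i) / pochhammer (c+2) i * pochhammer (x + 2 + of_nat i) (k - i)) =
       - (c-d) * (of_nat (Suc i) * ((-1)^(Suc i) * of_nat (Suc k choose Suc i) *
       (pochhammer a (Suc i) * pochhammer b (Suc i))
        / pochhammer (c+1) (Suc i) * pochhammer (x + 1 + of_nat (Suc i)) (Suc k - Suc i)))"
    proof -
      define B1 where "B1 = (of_nat (Suc k choose Suc i) :: complex)"
      have si: "(of_nat (Suc i) :: complex) \<noteq> 0" by (simp only: of_nat_eq_0_iff)
      have B1e: "B1 = of_nat (Suc k) * of_nat (k choose i) / of_nat (Suc i)"
        using bn si unfolding B1_def by (simp add: field_simps del: binomial_Suc_Suc of_nat_Suc)
      define c1 Q where "c1 = c + 1" and "Q = pochhammer (c+2) i"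
      have c1': "c1 \<noteq> 0" using c1 by (simp add: c1_def)
      have Q0: "Q \<noteq> 0" using poch_nz[OF nonpos_plus_nat[OF c, of 2], of i] by (simp add: Q_def)
      have pc': "pochhammer c1 (Suc i) = c1 * Q" using pc by (simp add: c1_def Q_def)
      show ?thesis
        unfolding c1_def[symmetric] pc' xx pochhammer_rec[of a] pochhammer_rec[of b] diff_Suc_Suc B1_def[symmetric] B1e
          c1_def[symmetric] Q_def[symmetric]
        using c1' si Q0 by (simp add: field_simps del: of_nat_Suc)
    qed
  qed
  also have "\<dots> = - (c-d) * (\<Sum>i\<le>Suc k. of_nat i * ((-1)^i * of_nat (Suc k choose i) * (pochhammer a i * pochhammer b i)
        / pochhammer (c+1) i * pochhammer (x + 1 + of_nat i) (Suc k - i)))"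
    by (subst sum.atMost_Suc_shift) (simp add: sum_distrib_left)
  finally show ?thesis .
qed

theorem mainTheorem7:
  fixes a b c d :: complex and k :: nat
  assumes "c \<notin> \<int>\<^sub>\<le>\<^sub>0" and "d + 1 \<notin> \<int>\<^sub>\<le>\<^sub>0" and "a + b - d + 1 \<notin> \<int>\<^sub>\<le>\<^sub>0"
    and "d - a + 1 \<notin> \<int>\<^sub>\<le>\<^sub>0" and "d - b + 1 \<notin> \<int>\<^sub>\<le>\<^sub>0"
    and "Re (d - a - b - of_nat k) > 0"
  shows "hyp3F2 a b (c + of_nat k + 1) (d + 1) c =
    (-1) ^ k * Gamma (d + 1) * Gamma (d - a - b - of_nat k) * pochhammer (a + b - d + 1) k
      / (c * Gamma (d - a + 1) * Gamma (d - b + 1))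
    * ((a * (b - c) + c * (d - b)) * hyp3F2 (- of_nat k) a b (c + 1) (a + b - d + 1)
       + a * b * (c - d) * of_nat k / ((c + 1) * (a + b - d + 1))
         * hyp3F2 (1 - of_nat k) (a + 1) (b + 1) (c + 2) (a + b - d + 2))"
proof -
  define x where "x = a + b - d"
  define e where "e = d + 1"
  define w where "w = d - a - b - of_nat k"
  define n where "n = Suc k"
  have c: "c \<notin> \<int>\<^sub>\<le>\<^sub>0" using assms(1) .
  have c0: "c \<noteq> 0" using c by auto
  have e: "e \<notin> \<int>\<^sub>\<le>\<^sub>0" using assms(2) by (simp add: e_def)
  have ea1: "e - a = d - a + 1" "e - b = d - b + 1" by (simp_all add: e_def)
  have ea: "e - a \<notin> \<int>\<^sub>\<le>\<^sub>0" unfolding ea1 by (rule assms(4))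
  have eb: "e - b \<notin> \<int>\<^sub>\<le>\<^sub>0" unfolding ea1 by (rule assms(5))
  have x1e: "a + b - d + 1 = x + 1" "a + b - d + 2 = x + 2" by (simp_all add: x_def)
  have x1: "x + 1 \<notin> \<int>\<^sub>\<le>\<^sub>0" using assms(3) unfolding x1e .
  have ev: "e - a - b - of_nat n = w" by (simp add: e_def w_def n_def)
  have r: "Re (e - a - b - of_nat n) > 0" using assms(6) unfolding ev w_def .
  define coef where "coef j = pochhammer (- of_nat n) j / (fact j * pochhammer c j)" for j
  define S where "S j = (-1)^j * pochhammer a j * pochhammer b j * Gamma e * Gamma w
      * pochhammer w (n-j) / (Gamma (e-a) * Gamma (e-b))" for j
  have termeq: "(\<lambda>m. pochhammer a m * pochhammer b m * pochhammer (c + of_nat k + 1) m /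
            (fact m * pochhammer (d + 1) m * pochhammer c m))
     = (\<lambda>m. \<Sum>j\<le>n. coef j * (pochhammer (- of_nat m) j * tt a b e m))"
  proof (rule ext)
    fix m
    have cn: "\<forall>i\<in>{0..<n}. c \<noteq> - of_nat i" using c by auto
    have V: "(\<Sum>j\<le>n. pochhammer (- of_nat m) j * pochhammer (- of_nat n) j / (fact j * pochhammer c j))
       = pochhammer (c + of_nat m) n / pochhammer c n"
      using Vandermonde_pochhammer[OF cn, of "- of_nat m"] by (simp add: atLeast0AtMost)
    have R: "pochhammer (c + of_nat k + 1) m / pochhammer c m = pochhammer (c + of_nat m) n / pochhammer c n"
    proof -
      have pp: "pochhammer c n * pochhammer (c + of_nat n) m = pochhammer c m * pochhammer (c + of_nat m) n"
        using pochhammer_product'[of c n m] pochhammer_product'[of c m n] by (simp add: add.commute)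
      have cc: "c + of_nat k + 1 = c + of_nat n" by (simp add: n_def)
      show ?thesis unfolding cc using pp poch_nz[OF c, of n] poch_nz[OF c, of m]
        by (simp add: field_simps)
    qed
    have "pochhammer a m * pochhammer b m * pochhammer (c + of_nat k + 1) m /
            (fact m * pochhammer (d + 1) m * pochhammer c m)
        = tt a b e m * (pochhammer (c + of_nat k + 1) m / pochhammer c m)"
      by (simp add: tt_def e_def)
    also have "\<dots> = tt a b e m * (\<Sum>j\<le>n. pochhammer (- of_nat m) j * pochhammer (- of_nat n) j / (fact j * pochhammer c j))"
      unfolding R V ..
    also have "\<dots> = (\<Sum>j\<le>n. coef j * (pochhammer (- of_nat m) j * tt a b e m))"
      by (simp add: sum_distrib_left coef_def mult_ac)
    finally show "pochhammer a m * pochhammer b m * pochhammer (c + of_nat k + 1) m /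
            (fact m * pochhammer (d + 1) m * pochhammer c m)
        = (\<Sum>j\<le>n. coef j * (pochhammer (- of_nat m) j * tt a b e m))" .
  qed
  have sm: "(\<lambda>m. \<Sum>j\<le>n. coef j * (pochhammer (- of_nat m) j * tt a b e m)) sums (\<Sum>j\<le>n. coef j * S j)"
  proof (rule sums_sum, rule sums_mult)
    fix j assume "j \<in> {..n}"
    thus "(\<lambda>m. pochhammer (- of_nat m) j * tt a b e m) sums S j"
      using inner_sum[OF e ea eb _ r, of j] unfolding ev S_def by simp
  qed
  have LHS: "hyp3F2 a b (c + of_nat k + 1) (d + 1) c = (\<Sum>j\<le>n. coef j * S j)"
    unfolding hyp3F2_def termeq using sm by (rule sums_unique[symmetric])
  define K0 where "K0 = Gamma e * Gamma w / (Gamma (e-a) * Gamma (e-b))"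
  define f where "f = (\<lambda>j. (-1)^(Suc k - j) * (pochhammer a j * pochhammer b j) / pochhammer c j
                     * pochhammer (x + of_nat j) (Suc k - j))"
  have conv: "coef j * S j = K0 * (of_nat (Suc k choose j) * f j)" if j: "j \<le> Suc k" for j
  proof -
    have wm: "w = - (x + of_nat k)" by (simp add: w_def x_def)
    have xx: "x + of_nat k - of_nat (Suc k - j) + 1 = x + of_nat j" using j by (simp add: of_nat_diff)
    have pw: "pochhammer w (Suc k - j) = (-1)^(Suc k - j) * pochhammer (x + of_nat j) (Suc k - j)"
      unfolding wm using pochhammer_minus[of "x + of_nat k" "Suc k - j"] by (simp only: xx)
    have ss: "((-1)^j * (-1)^j :: complex) = 1" by (simp flip: power_add)
    show ?thesis unfolding coef_def S_def K0_def f_def n_def pw poch_neg_nat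
      using poch_nz[OF c, of j] ss by (simp add: field_simps)
  qed
  have L2: "hyp3F2 a b (c + of_nat k + 1) (d + 1) c = K0 * (\<Sum>i\<le>k. of_nat (k choose i) * (f i + f (Suc i)))"
  proof -
    have "(\<Sum>j\<le>n. coef j * S j) = (\<Sum>j\<le>Suc k. K0 * (of_nat (Suc k choose j) * f j))"
      unfolding n_def by (intro sum.cong refl conv) auto
    also have "\<dots> = K0 * (\<Sum>j\<le>Suc k. of_nat (Suc k choose j) * f j)" by (simp only: sum_distrib_left)
    also have "\<dots> = K0 * (\<Sum>i\<le>k. of_nat (k choose i) * (f i + f (Suc i)))" by (simp only: pascal_sum)
    finally show ?thesis using LHS by simp
  qed
  define U where "U i = (-1)^i * of_nat (k choose i) * (pochhammer a i * pochhammer b i) / pochhammer (c+1) i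
       * pochhammer (x + 1 + of_nat i) (k - i)" for i
  have FI: "c * (-1)^k * (\<Sum>i\<le>k. of_nat (k choose i) * (f i + f (Suc i))) =
      (\<Sum>i\<le>k. (a*b - c*x - (c-d) * of_nat i) * U i)"
  proof -
    have "c * (-1)^k * (\<Sum>i\<le>k. of_nat (k choose i) * (f i + f (Suc i))) =
        (\<Sum>i\<le>k. of_nat (k choose i) * (c * (-1)^k * (f i + f (Suc i))))"
      by (simp add: sum_distrib_left mult_ac)
    also have "\<dots> = (\<Sum>i\<le>k. (a*b - c*x - (c-d) * of_nat i) * U i)"
    proof (intro sum.cong refl)
      fix i assume i: "i \<in> {..k}"
      have dd: "c - (a + b - x) = c - d" by (simp add: x_def)
      show "of_nat (k choose i) * (c * (-1)^k * (f i + f (Suc i))) = (a*b - c*x - (c-d) * of_nat i) * U i"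
      proof -
        have fi: "c * (-1)^k * (f i + f (Suc i)) = (a*b - c*x - (c - (a+b-x)) * of_nat i) *
          ((-1)^i * (pochhammer a i * pochhammer b i) / pochhammer (c+1) i * pochhammer (x + 1 + of_nat i) (k - i))"
          using FI_term[OF c, of i k a b x] i unfolding f_def by simp
        show ?thesis unfolding fi dd by (simp add: U_def mult_ac)
      qed
    qed
    finally show ?thesis .
  qed
  have P1: "hyp3F2 (- of_nat k) a b (c+1) (x+1) * pochhammer (x+1) k = (\<Sum>i\<le>k. U i)"
    unfolding U_def by (rule H1[OF x1])
  have P2: "a * b * (c - d) * of_nat k / ((c + 1) * (x + 1)) * hyp3F2 (1 - of_nat k) (a + 1) (b + 1) (c + 2) (x + 2)
      * pochhammer (x+1) k = - (c-d) * (\<Sum>i\<le>k. of_nat i * U i)"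
  proof (cases k)
    case 0 then show ?thesis by simp
  next
    case (Suc k')
    show ?thesis using H2[OF x1 c, of a b d k'] unfolding Suc U_def by simp
  qed
  have BR: "((a * (b - c) + c * (d - b)) * hyp3F2 (- of_nat k) a b (c + 1) (x + 1)
       + a * b * (c - d) * of_nat k / ((c + 1) * (x + 1))
         * hyp3F2 (1 - of_nat k) (a + 1) (b + 1) (c + 2) (x + 2)) * pochhammer (x+1) k
     = (\<Sum>i\<le>k. (a*b - c*x - (c-d) * of_nat i) * U i)"
  proof -
    have ab: "a * (b - c) + c * (d - b) = a*b - c*x" by (simp add: x_def algebra_simps)
    have "((a * (b - c) + c * (d - b)) * hyp3F2 (- of_nat k) a b (c + 1) (x + 1)
       + a * b * (c - d) * of_nat k / ((c + 1) * (x + 1))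
         * hyp3F2 (1 - of_nat k) (a + 1) (b + 1) (c + 2) (x + 2)) * pochhammer (x+1) k
       = (a*b - c*x) * (hyp3F2 (- of_nat k) a b (c+1) (x+1) * pochhammer (x+1) k)
         + a * b * (c - d) * of_nat k / ((c + 1) * (x + 1)) * hyp3F2 (1 - of_nat k) (a + 1) (b + 1) (c + 2) (x + 2)
      * pochhammer (x+1) k"
      unfolding ab by (simp add: algebra_simps)
    also have "\<dots> = (a*b - c*x) * (\<Sum>i\<le>k. U i) - (c-d) * (\<Sum>i\<le>k. of_nat i * U i)"
      unfolding P1 P2 by (simp add: algebra_simps)
    also have "\<dots> = (\<Sum>i\<le>k. (a*b - c*x - (c-d) * of_nat i) * U i)"
      by (simp add: sum_distrib_left sum_subtractf[symmetric] algebra_simps)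
    finally show ?thesis .
  qed
  have gg: "Gamma (d + 1) = Gamma e" "Gamma (d - a - b - of_nat k) = Gamma w"
     "Gamma (d - a + 1) = Gamma (e - a)" "Gamma (d - b + 1) = Gamma (e - b)"
    by (simp_all add: e_def w_def algebra_simps)
  have ss: "((-1)^k * (-1)^k :: complex) = 1" by (simp flip: power_add)
  define T where "T = (\<Sum>i\<le>k. of_nat (k choose i) * (f i + f (Suc i)))"
  have FI': "(\<Sum>i\<le>k. (a*b - c*x - (c-d) * of_nat i) * U i) = c * (-1)^k * T"
    using FI by (simp add: T_def)
  define BRE where "BRE = ((a * (b - c) + c * (d - b)) * hyp3F2 (- of_nat k) a b (c + 1) (x + 1)
       + a * b * (c - d) * of_nat k / ((c + 1) * (x + 1))
         * hyp3F2 (1 - of_nat k) (a + 1) (b + 1) (c + 2) (x + 2))"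
  have BR': "BRE * pochhammer (x+1) k = c * (-1)^k * T" unfolding BRE_def BR FI' ..
  have G0: "Gamma (e-a) \<noteq> 0" "Gamma (e-b) \<noteq> 0" using ea eb by (simp_all add: Gamma_eq_zero_iff)
  have "(-1) ^ k * Gamma e * Gamma w * pochhammer (x + 1) k / (c * Gamma (e - a) * Gamma (e - b)) * BRE
      = (-1) ^ k * Gamma e * Gamma w / (c * Gamma (e - a) * Gamma (e - b)) * (BRE * pochhammer (x + 1) k)"
    by (simp add: mult_ac)
  also have "\<dots> = (-1) ^ k * Gamma e * Gamma w / (c * Gamma (e - a) * Gamma (e - b)) * (c * (-1)^k * T)"
    unfolding BR' ..
  also have "\<dots> = K0 * T"
    unfolding K0_def using c0 G0 ss by (simp add: field_simps)
  finally show ?thesis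
    unfolding x1e gg L2 T_def[symmetric] BRE_def[symmetric] by simp
qed

end
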